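(* Let $(\mathcal{C},\mathbb{E},\mathfrak{s})$ be an extriangulated category with enough injective objects and enough projective morphisms, and let $\mathbb{F}\subseteq\mathbb{E}$ be an additive subfunctor having enough injective morphisms. Then the following are equivalent: (1) $\mathbb{F}$ has enough special injective morphisms; (2) $\mathbb{F}=\mathrm{Ph}(\mathbb{F})^\star$; (3) $\mathrm{Ph}(\mathbb{F})^{\perp_{\mathbb{E}}}=\mathbb{F}\text{-}\mathrm{inj}$.
   Context: An extriangulated category $(\mathcal{C},\mathbb{E},\mathfrak{s})$ (Nakaoka–Palu): additive $\mathcal{C}$, biadditive $\mathbb{E}:\mathcal{C}^{\mathrm{op}}\times\mathcal{C}\to\mathrm{Ab}$, additive realization $\mathfrak{s}$ assigning to each $\delta\in\mathbb{E}(C,A)$ an equivalence class of sequences $A\to B\to C$, forming $\mathbb{E}$-triangles $A\to B\to C\overset{\delta}{\dashrightarrow}$, satisfying (ET1)–(ET4), (ET3)$^{\mathrm{op}}$, (ET4)$^{\mathrm{op}}$. Notation $a_\star\delta=\mathbb{E}(C,a)(\delta)$, $c^\star\delta=\mathbb{E}(c,A)(\delta)$; a morphism of $\mathbb{E}$-triangles is a commuting triple $(a,b,c)$ with $a_\star\delta=c^\star\delta'$. Enough injective objects: every $A$ admits an $\mathbb{E}$-triangle $A\to E\to C\overset{\delta}{\dashrightarrow}$ with $\mathbb{E}(-,E)=0$. Enough projective morphisms: every $C$ admits an $\mathbb{E}$-triangle $K\to P\xrightarrow{p}C\overset{\gamma}{\dashrightarrow}$ with $p^\star\delta=0$ for all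 $\delta\in\mathbb{E}(C,A)$. Additive subfunctor $\mathbb{F}$: subgroups $\mathbb{F}(C,A)\subseteq\mathbb{E}(C,A)$ stable under $a_\star,c^\star$; $\mathbb{F}$-triangles have extension in $\mathbb{F}$. $\mathrm{Ph}(\mathbb{F})$: morphisms $\varphi:X\to C$ with $\varphi^\star\delta\in\mathbb{F}(X,A)$ for all $\delta\in\mathbb{E}(C,A)$ (an ideal). $\mathbb{F}\text{-}\mathrm{inj}$: $i:A\to Y$ with $i_\star\delta=0$ for all $\delta\in\mathbb{F}(C,A)$. For an ideal $\mathcal{I}$, $\mathcal{I}^\star(X,A)=\{i^\star\delta\mid i\in\mathcal{I}(X,C),\delta\in\mathbb{E}(C,A)\}$ and $\mathcal{I}^{\perp_{\mathbb{E}}}=\{g:A\to Y\mid m^\star g_\star\delta=0\ \forall m\in\mathcal{I},\,m:X\to C,\ \forall\delta\in\mathbb{E}(C,A)\}$. $\mathbb{F}$ has enough injective morphisms: every $A$ admits an $\mathbb{F}$-triangle $A\xrightarrow{e}B\to C\overset{\delta}{\dashrightarrow}$ with $e\in\mathbb{F}\text{-}\mathrm{inj}$; enough special injective morphisms: moreover there is an $\mathbb{E}$-triangle $A\to B'\to C'\overset{\delta'}{\dashrightarrow}$ and a morphism $(\mathrm{id}_A,b,\varphi)$ from the former to it with $\varphi\in\mathrm{Ph}(\mathbb{F})$. *)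

theory Defs
  imports Main
begin

text \<open>Objects of type 'o, morphisms of type 'm (each with a source and target),
  extensions of type 'e (each delta in E(C,A) carries edom = C and ecod = A).
  cmp g f is the composite g o f.  push a delta is a_star delta, pull c delta is c^star delta.
  realizes delta x y means that the sequence A -x-> B -y-> C belongs to the
  equivalence class s(delta).\<close>

record ('o,'m,'e) ext_cat_data =
  obj :: "'o set"
  mor :: "'m set"
  src :: "'m \<Rightarrow> 'o"
  tgt :: "'m \<Rightarrow> 'o"
  cmp :: "'m \<Rightarrow> 'm \<Rightarrow> 'm"
  idm :: "'o \<Rightarrow> 'm"
  madd :: "'m \<Rightarrow> 'm \<Rightarrow> 'm"
  mzero :: "'o \<Rightarrow> 'o \<Rightarrow> 'm"
  mneg :: "'m \<Rightarrow> 'm"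
  eel :: "'e set"
  edom :: "'e \<Rightarrow> 'o"
  ecod :: "'e \<Rightarrow> 'o"
  eadd :: "'e \<Rightarrow> 'e \<Rightarrow> 'e"
  ezero :: "'o \<Rightarrow> 'o \<Rightarrow> 'e"
  eneg :: "'e \<Rightarrow> 'e"
  push :: "'m \<Rightarrow> 'e \<Rightarrow> 'e"
  pull :: "'m \<Rightarrow> 'e \<Rightarrow> 'e"
  realizes :: "'e \<Rightarrow> 'm \<Rightarrow> 'm \<Rightarrow> bool"

definition hom :: "('o,'m,'e,'z) ext_cat_data_scheme \<Rightarrow> 'o \<Rightarrow> 'o \<Rightarrow> 'm set" where
  "hom R X Y = {f \<in> mor R. src R f = X \<and> tgt R f = Y}"

definition ext :: "('o,'m,'e,'z) ext_cat_data_scheme \<Rightarrow> 'o \<Rightarrow> 'o \<Rightarrow> 'e set" where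
  "ext R C A = {d \<in> eel R. edom R d = C \<and> ecod R d = A}"

definition is_category :: "('o,'m,'e,'z) ext_cat_data_scheme \<Rightarrow> bool" where
  "is_category R \<longleftrightarrow>
     (\<forall>f\<in>mor R. src R f \<in> obj R \<and> tgt R f \<in> obj R) \<and>
     (\<forall>X\<in>obj R. idm R X \<in> hom R X X) \<and>
     (\<forall>X Y Z f g. f \<in> hom R X Y \<longrightarrow> g \<in> hom R Y Z \<longrightarrow> cmp R g f \<in> hom R X Z) \<and>
     (\<forall>X Y f. f \<in> hom R X Y \<longrightarrow> cmp R (idm R Y) f = f \<and> cmp R f (idm R X) = f) \<and>
     (\<forall>W X Y Z f g h. f \<in> hom R W X \<longrightarrow> g \<in> hom R X Y \<longrightarrow> h \<in> hom R Y Z \<longrightarrow>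
         cmp R h (cmp R g f) = cmp R (cmp R h g) f)"

definition is_preadditive :: "('o,'m,'e,'z) ext_cat_data_scheme \<Rightarrow> bool" where
  "is_preadditive R \<longleftrightarrow> is_category R \<and>
     (\<forall>X\<in>obj R. \<forall>Y\<in>obj R.
        mzero R X Y \<in> hom R X Y \<and>
        (\<forall>f\<in>hom R X Y. \<forall>g\<in>hom R X Y. madd R f g \<in> hom R X Y \<and> madd R f g = madd R g f) \<and>
        (\<forall>f\<in>hom R X Y. mneg R f \<in> hom R X Y \<and> madd R f (mzero R X Y) = f \<and>
            madd R f (mneg R f) = mzero R X Y) \<and>
        (\<forall>f\<in>hom R X Y. \<forall>g\<in>hom R X Y. \<forall>h\<in>hom R X Y.
            madd R (madd R f g) h = madd R f (madd R g h))) \<and>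
     (\<forall>W X Y Z f g h k. f \<in> hom R X Y \<longrightarrow> g \<in> hom R X Y \<longrightarrow> h \<in> hom R Y Z \<longrightarrow> k \<in> hom R W X \<longrightarrow>
        cmp R h (madd R f g) = madd R (cmp R h f) (cmp R h g) \<and>
        cmp R (madd R f g) k = madd R (cmp R f k) (cmp R g k))"

definition is_zero_obj :: "('o,'m,'e,'z) ext_cat_data_scheme \<Rightarrow> 'o \<Rightarrow> bool" where
  "is_zero_obj R Z \<longleftrightarrow> Z \<in> obj R \<and> idm R Z = mzero R Z Z"

definition is_biproduct :: "('o,'m,'e,'z) ext_cat_data_scheme \<Rightarrow> 'o \<Rightarrow> 'o \<Rightarrow> 'o \<Rightarrow> 'm \<Rightarrow> 'm \<Rightarrow> 'm \<Rightarrow> 'm \<Rightarrow> bool" where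
  "is_biproduct R A B P i1 i2 p1 p2 \<longleftrightarrow> P \<in> obj R \<and>
     i1 \<in> hom R A P \<and> i2 \<in> hom R B P \<and> p1 \<in> hom R P A \<and> p2 \<in> hom R P B \<and>
     cmp R p1 i1 = idm R A \<and> cmp R p2 i2 = idm R B \<and>
     cmp R p1 i2 = mzero R B A \<and> cmp R p2 i1 = mzero R A B \<and>
     madd R (cmp R i1 p1) (cmp R i2 p2) = idm R P"

definition is_additive :: "('o,'m,'e,'z) ext_cat_data_scheme \<Rightarrow> bool" where
  "is_additive R \<longleftrightarrow> is_preadditive R \<and> (\<exists>Z. is_zero_obj R Z) \<and>
     (\<forall>A\<in>obj R. \<forall>B\<in>obj R. \<exists>P i1 i2 p1 p2. is_biproduct R A B P i1 i2 p1 p2)"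

definition ET1 :: "('o,'m,'e,'z) ext_cat_data_scheme \<Rightarrow> bool" where
  "ET1 R \<longleftrightarrow>
     (\<forall>C\<in>obj R. \<forall>A\<in>obj R.
        ezero R C A \<in> ext R C A \<and>
        (\<forall>d\<in>ext R C A. \<forall>d'\<in>ext R C A. eadd R d d' \<in> ext R C A \<and> eadd R d d' = eadd R d' d) \<and>
        (\<forall>d\<in>ext R C A. eneg R d \<in> ext R C A \<and> eadd R d (ezero R C A) = d \<and>
            eadd R d (eneg R d) = ezero R C A) \<and>
        (\<forall>d\<in>ext R C A. \<forall>d'\<in>ext R C A. \<forall>d''\<in>ext R C A.
            eadd R (eadd R d d') d'' = eadd R d (eadd R d' d''))) \<and>
     (\<forall>C A A' a d. a \<in> hom R A A' \<longrightarrow> d \<in> ext R C A \<longrightarrow> push R a d \<in> ext R C A') \<and>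
     (\<forall>C C' A c d. c \<in> hom R C' C \<longrightarrow> d \<in> ext R C A \<longrightarrow> pull R c d \<in> ext R C' A) \<and>
     (\<forall>C A d. C \<in> obj R \<longrightarrow> A \<in> obj R \<longrightarrow> d \<in> ext R C A \<longrightarrow>
        push R (idm R A) d = d \<and> pull R (idm R C) d = d) \<and>
     (\<forall>C A A' A'' a a' d. a \<in> hom R A A' \<longrightarrow> a' \<in> hom R A' A'' \<longrightarrow> d \<in> ext R C A \<longrightarrow>
        push R (cmp R a' a) d = push R a' (push R a d)) \<and>
     (\<forall>C C' C'' A c c' d. c \<in> hom R C' C \<longrightarrow> c' \<in> hom R C'' C' \<longrightarrow> d \<in> ext R C A \<longrightarrow>
        pull R (cmp R c c') d = pull R c' (pull R c d)) \<and>
     (\<forall>C C' A A' a c d. a \<in> hom R A A' \<longrightarrow> c \<in> hom R C' C \<longrightarrow> d \<in> ext R C A \<longrightarrow>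
        pull R c (push R a d) = push R a (pull R c d)) \<and>
     (\<forall>C A A' a a' d d'. a \<in> hom R A A' \<longrightarrow> a' \<in> hom R A A' \<longrightarrow> d \<in> ext R C A \<longrightarrow> d' \<in> ext R C A \<longrightarrow>
        push R a (eadd R d d') = eadd R (push R a d) (push R a d') \<and>
        push R (madd R a a') d = eadd R (push R a d) (push R a' d)) \<and>
     (\<forall>C C' A c c' d d'. c \<in> hom R C' C \<longrightarrow> c' \<in> hom R C' C \<longrightarrow> d \<in> ext R C A \<longrightarrow> d' \<in> ext R C A \<longrightarrow>
        pull R c (eadd R d d') = eadd R (pull R c d) (pull R c d') \<and>
        pull R (madd R c c') d = eadd R (pull R c d) (pull R c' d))"

definition seq_equiv :: "('o,'m,'e,'z) ext_cat_data_scheme \<Rightarrow> 'o \<Rightarrow> 'o \<Rightarrow> 'm \<Rightarrow> 'm \<Rightarrow> 'm \<Rightarrow> 'm \<Rightarrow> bool" where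
  "seq_equiv R A C x y x' y' \<longleftrightarrow>
     (\<exists>B B' b b'. x \<in> hom R A B \<and> y \<in> hom R B C \<and> x' \<in> hom R A B' \<and> y' \<in> hom R B' C \<and>
        b \<in> hom R B B' \<and> b' \<in> hom R B' B \<and> cmp R b' b = idm R B \<and> cmp R b b' = idm R B' \<and>
        cmp R b x = x' \<and> cmp R y' b = y)"

definition is_realization :: "('o,'m,'e,'z) ext_cat_data_scheme \<Rightarrow> bool" where
  "is_realization R \<longleftrightarrow>
     (\<forall>C\<in>obj R. \<forall>A\<in>obj R. \<forall>d\<in>ext R C A.
        (\<exists>B x y. x \<in> hom R A B \<and> y \<in> hom R B C \<and> realizes R d x y) \<and>
        (\<forall>x y. realizes R d x y \<longrightarrow> (\<exists>B. x \<in> hom R A B \<and> y \<in> hom R B C)) \<and>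
        (\<forall>x y x' y'. realizes R d x y \<longrightarrow> (realizes R d x' y' \<longleftrightarrow> seq_equiv R A C x y x' y'))) \<and>
     (\<forall>C A C' A' d d' a c x y x' y'.
        d \<in> ext R C A \<longrightarrow> d' \<in> ext R C' A' \<longrightarrow> a \<in> hom R A A' \<longrightarrow> c \<in> hom R C C' \<longrightarrow>
        push R a d = pull R c d' \<longrightarrow> realizes R d x y \<longrightarrow> realizes R d' x' y' \<longrightarrow>
        (\<exists>b\<in>hom R (tgt R x) (tgt R x'). cmp R b x = cmp R x' a \<and> cmp R c y = cmp R y' b))"

text \<open>(ET2): the realization is additive.  The direct sum of d in E(C,A) and d' in E(C',A')
  is the element iA_star pC^star d + iA'_star pC'^star d' of E(C+C', A+A').\<close>
definition ET2 :: "('o,'m,'e,'z) ext_cat_data_scheme \<Rightarrow> bool" where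
  "ET2 R \<longleftrightarrow>
     (\<forall>A\<in>obj R. \<forall>C\<in>obj R. \<forall>P i1 i2 p1 p2. is_biproduct R A C P i1 i2 p1 p2 \<longrightarrow>
        realizes R (ezero R C A) i1 p2) \<and>
     (\<forall>A B C A' B' C' d d' x y x' y' PA iA iA' pA pA' PB iB iB' pB pB' PC iC iC' pC pC'.
        d \<in> ext R C A \<longrightarrow> d' \<in> ext R C' A' \<longrightarrow>
        x \<in> hom R A B \<longrightarrow> y \<in> hom R B C \<longrightarrow> x' \<in> hom R A' B' \<longrightarrow> y' \<in> hom R B' C' \<longrightarrow>
        realizes R d x y \<longrightarrow> realizes R d' x' y' \<longrightarrow>
        is_biproduct R A A' PA iA iA' pA pA' \<longrightarrow>
        is_biproduct R B B' PB iB iB' pB pB' \<longrightarrow>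
        is_biproduct R C C' PC iC iC' pC pC' \<longrightarrow>
        realizes R (eadd R (push R iA (pull R pC d)) (push R iA' (pull R pC' d')))
          (madd R (cmp R iB (cmp R x pA)) (cmp R iB' (cmp R x' pA')))
          (madd R (cmp R iC (cmp R y pB)) (cmp R iC' (cmp R y' pB'))))"

definition ET3 :: "('o,'m,'e,'z) ext_cat_data_scheme \<Rightarrow> bool" where
  "ET3 R \<longleftrightarrow>
     (\<forall>A B C A' B' C' d d' x y x' y' a b.
        d \<in> ext R C A \<longrightarrow> d' \<in> ext R C' A' \<longrightarrow>
        x \<in> hom R A B \<longrightarrow> y \<in> hom R B C \<longrightarrow> x' \<in> hom R A' B' \<longrightarrow> y' \<in> hom R B' C' \<longrightarrow>
        realizes R d x y \<longrightarrow> realizes R d' x' y' \<longrightarrow>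
        a \<in> hom R A A' \<longrightarrow> b \<in> hom R B B' \<longrightarrow> cmp R x' a = cmp R b x \<longrightarrow>
        (\<exists>c\<in>hom R C C'. cmp R c y = cmp R y' b \<and> push R a d = pull R c d'))"

definition ET3op :: "('o,'m,'e,'z) ext_cat_data_scheme \<Rightarrow> bool" where
  "ET3op R \<longleftrightarrow>
     (\<forall>A B C A' B' C' d d' x y x' y' b c.
        d \<in> ext R C A \<longrightarrow> d' \<in> ext R C' A' \<longrightarrow>
        x \<in> hom R A B \<longrightarrow> y \<in> hom R B C \<longrightarrow> x' \<in> hom R A' B' \<longrightarrow> y' \<in> hom R B' C' \<longrightarrow>
        realizes R d x y \<longrightarrow> realizes R d' x' y' \<longrightarrow>
        b \<in> hom R B B' \<longrightarrow> c \<in> hom R C C' \<longrightarrow> cmp R c y = cmp R y' b \<longrightarrow>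
        (\<exists>a\<in>hom R A A'. cmp R x' a = cmp R b x \<and> push R a d = pull R c d'))"

definition ET4 :: "('o,'m,'e,'z) ext_cat_data_scheme \<Rightarrow> bool" where
  "ET4 R \<longleftrightarrow>
     (\<forall>A B C D F d d' f f' g g'.
        d \<in> ext R D A \<longrightarrow> d' \<in> ext R F B \<longrightarrow>
        f \<in> hom R A B \<longrightarrow> f' \<in> hom R B D \<longrightarrow> g \<in> hom R B C \<longrightarrow> g' \<in> hom R C F \<longrightarrow>
        realizes R d f f' \<longrightarrow> realizes R d' g g' \<longrightarrow>
        (\<exists>E h h' dd e d''. E \<in> obj R \<and> h \<in> hom R A C \<and> h' \<in> hom R C E \<and>
           dd \<in> hom R D E \<and> e \<in> hom R E F \<and> d'' \<in> ext R E A \<and>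
           h = cmp R g f \<and> cmp R dd f' = cmp R h' g \<and> cmp R e h' = g' \<and>
           realizes R d'' h h' \<and>
           realizes R (push R f' d') dd e \<and>
           pull R dd d'' = d \<and>
           push R f d'' = pull R e d'))"

definition ET4op :: "('o,'m,'e,'z) ext_cat_data_scheme \<Rightarrow> bool" where
  "ET4op R \<longleftrightarrow>
     (\<forall>A B C D F d d' f f' g g'.
        d \<in> ext R B D \<longrightarrow> d' \<in> ext R C F \<longrightarrow>
        f' \<in> hom R D A \<longrightarrow> f \<in> hom R A B \<longrightarrow> g' \<in> hom R F B \<longrightarrow> g \<in> hom R B C \<longrightarrow>
        realizes R d f' f \<longrightarrow> realizes R d' g' g \<longrightarrow>
        (\<exists>E h h' dd e d''. E \<in> obj R \<and> dd \<in> hom R D E \<and> e \<in> hom R E F \<and>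
           h' \<in> hom R E A \<and> h \<in> hom R A C \<and> d'' \<in> ext R C E \<and>
           h = cmp R g f \<and> cmp R h' dd = f' \<and> cmp R f h' = cmp R g' e \<and>
           realizes R d'' h' h \<and>
           realizes R (pull R g' d) dd e \<and>
           push R e d'' = d' \<and>
           push R dd d = pull R g d''))"

definition extriangulated :: "('o,'m,'e,'z) ext_cat_data_scheme \<Rightarrow> bool" where
  "extriangulated R \<longleftrightarrow> is_additive R \<and> ET1 R \<and> is_realization R \<and> ET2 R \<and>
     ET3 R \<and> ET3op R \<and> ET4 R \<and> ET4op R"

definition E_triangle :: "('o,'m,'e,'z) ext_cat_data_scheme \<Rightarrow> 'o \<Rightarrow> 'o \<Rightarrow> 'o \<Rightarrow> 'm \<Rightarrow> 'm \<Rightarrow> 'e \<Rightarrow> bool" where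
  "E_triangle R A B C x y d \<longleftrightarrow>
     d \<in> ext R C A \<and> x \<in> hom R A B \<and> y \<in> hom R B C \<and> realizes R d x y"

definition enough_injective_objects :: "('o,'m,'e,'z) ext_cat_data_scheme \<Rightarrow> bool" where
  "enough_injective_objects R \<longleftrightarrow>
     (\<forall>A\<in>obj R. \<exists>E C x y d. E_triangle R A E C x y d \<and> (\<forall>X\<in>obj R. ext R X E = {ezero R X E}))"

definition enough_projective_morphisms :: "('o,'m,'e,'z) ext_cat_data_scheme \<Rightarrow> bool" where
  "enough_projective_morphisms R \<longleftrightarrow>
     (\<forall>C\<in>obj R. \<exists>K P k p g. E_triangle R K P C k p g \<and>
        (\<forall>A\<in>obj R. \<forall>d\<in>ext R C A. pull R p d = ezero R P A))"

text \<open>An additive subfunctor F of E is given by the set of its elements;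
  F(C,A) = ext R C A \<inter> F.\<close>
definition additive_subfunctor :: "('o,'m,'e,'z) ext_cat_data_scheme \<Rightarrow> 'e set \<Rightarrow> bool" where
  "additive_subfunctor R F \<longleftrightarrow> F \<subseteq> eel R \<and>
     (\<forall>C\<in>obj R. \<forall>A\<in>obj R. ezero R C A \<in> F \<and>
        (\<forall>d\<in>ext R C A \<inter> F. \<forall>d'\<in>ext R C A \<inter> F. eadd R d d' \<in> F) \<and>
        (\<forall>d\<in>ext R C A \<inter> F. eneg R d \<in> F)) \<and>
     (\<forall>C A A' a d. a \<in> hom R A A' \<longrightarrow> d \<in> ext R C A \<inter> F \<longrightarrow> push R a d \<in> F) \<and>
     (\<forall>C C' A c d. c \<in> hom R C' C \<longrightarrow> d \<in> ext R C A \<inter> F \<longrightarrow> pull R c d \<in> F)"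

definition Ph :: "('o,'m,'e,'z) ext_cat_data_scheme \<Rightarrow> 'e set \<Rightarrow> 'm set" where
  "Ph R F = {phi \<in> mor R. \<forall>A\<in>obj R. \<forall>d\<in>ext R (tgt R phi) A. pull R phi d \<in> F}"

definition F_inj :: "('o,'m,'e,'z) ext_cat_data_scheme \<Rightarrow> 'e set \<Rightarrow> 'm set" where
  "F_inj R F = {i \<in> mor R. \<forall>C\<in>obj R. \<forall>d\<in>ext R C (src R i) \<inter> F. push R i d = ezero R C (tgt R i)}"

definition ideal_star :: "('o,'m,'e,'z) ext_cat_data_scheme \<Rightarrow> 'm set \<Rightarrow> 'o \<Rightarrow> 'o \<Rightarrow> 'e set" where
  "ideal_star R I X A = {pull R i d | i d C. C \<in> obj R \<and> i \<in> I \<and> i \<in> hom R X C \<and> d \<in> ext R C A}"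

definition perpE :: "('o,'m,'e,'z) ext_cat_data_scheme \<Rightarrow> 'm set \<Rightarrow> 'm set" where
  "perpE R I = {g \<in> mor R. \<forall>m\<in>I. \<forall>d\<in>ext R (tgt R m) (src R g).
      pull R m (push R g d) = ezero R (src R m) (tgt R g)}"

definition enough_injective_morphisms :: "('o,'m,'e,'z) ext_cat_data_scheme \<Rightarrow> 'e set \<Rightarrow> bool" where
  "enough_injective_morphisms R F \<longleftrightarrow>
     (\<forall>A\<in>obj R. \<exists>B C e y d. E_triangle R A B C e y d \<and> d \<in> F \<and> e \<in> F_inj R F)"

definition enough_special_injective_morphisms :: "('o,'m,'e,'z) ext_cat_data_scheme \<Rightarrow> 'e set \<Rightarrow> bool" where
  "enough_special_injective_morphisms R F \<longleftrightarrow>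
     (\<forall>A\<in>obj R. \<exists>B C e y d. E_triangle R A B C e y d \<and> d \<in> F \<and> e \<in> F_inj R F \<and>
        (\<exists>B' C' x' y' d' b phi. E_triangle R A B' C' x' y' d' \<and>
           b \<in> hom R B B' \<and> phi \<in> hom R C C' \<and> phi \<in> Ph R F \<and>
           cmp R b e = cmp R x' (idm R A) \<and> cmp R phi y = cmp R y' b \<and>
           push R (idm R A) d = pull R phi d'))"

end

theory Submission
  imports Defs
begin



locale xtri = fixes R :: "('o,'m,'e,'z) ext_cat_data_scheme" assumes xt: "extriangulated R"
begin

lemma cat: "is_category R" using xt unfolding extriangulated_def is_additive_def is_preadditive_def by blast
lemma et1: "ET1 R" using xt unfolding extriangulated_def by blast
lemma rl: "is_realization R" using xt unfolding extriangulated_def by blast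
lemma et2: "ET2 R" using xt unfolding extriangulated_def by blast
lemma et3: "ET3 R" using xt unfolding extriangulated_def by blast
lemma et3op: "ET3op R" using xt unfolding extriangulated_def by blast

lemma hom_objs: "f \<in> hom R X Y \<Longrightarrow> X \<in> obj R \<and> Y \<in> obj R"
  using cat unfolding is_category_def hom_def by blast
lemma hom_I: "f \<in> mor R \<Longrightarrow> f \<in> hom R (src R f) (tgt R f)" unfolding hom_def by blast
lemma hom_D: "f \<in> hom R X Y \<Longrightarrow> f \<in> mor R \<and> src R f = X \<and> tgt R f = Y" unfolding hom_def by blast
lemma id_hom: "X \<in> obj R \<Longrightarrow> idm R X \<in> hom R X X" using cat unfolding is_category_def by blast
lemma comp_hom: "f \<in> hom R X Y \<Longrightarrow> g \<in> hom R Y Z \<Longrightarrow> cmp R g f \<in> hom R X Z"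
  using cat unfolding is_category_def by blast
lemma id_l: "f \<in> hom R X Y \<Longrightarrow> cmp R (idm R Y) f = f" using cat unfolding is_category_def by blast
lemma id_r: "f \<in> hom R X Y \<Longrightarrow> cmp R f (idm R X) = f" using cat unfolding is_category_def by blast
lemma assoc: "f \<in> hom R W X \<Longrightarrow> g \<in> hom R X Y \<Longrightarrow> h \<in> hom R Y Z \<Longrightarrow>
   cmp R h (cmp R g f) = cmp R (cmp R h g) f" using cat unfolding is_category_def by blast
lemma biprod: "A \<in> obj R \<Longrightarrow> B \<in> obj R \<Longrightarrow> \<exists>P i1 i2 p1 p2. is_biproduct R A B P i1 i2 p1 p2"
  using xt unfolding extriangulated_def is_additive_def by blast
lemma zero_real: "is_biproduct R A C P i1 i2 p1 p2 \<Longrightarrow> A \<in> obj R \<Longrightarrow> C \<in> obj R \<Longrightarrow>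
   realizes R (ezero R C A) i1 p2" using et2 unfolding ET2_def by blast

lemma et1c:
  shows et1c1: "\<forall>C\<in>obj R. \<forall>A\<in>obj R.
        ezero R C A \<in> ext R C A \<and>
        (\<forall>d\<in>ext R C A. \<forall>d'\<in>ext R C A. eadd R d d' \<in> ext R C A \<and> eadd R d d' = eadd R d' d) \<and>
        (\<forall>d\<in>ext R C A. eneg R d \<in> ext R C A \<and> eadd R d (ezero R C A) = d \<and>
            eadd R d (eneg R d) = ezero R C A) \<and>
        (\<forall>d\<in>ext R C A. \<forall>d'\<in>ext R C A. \<forall>d''\<in>ext R C A.
            eadd R (eadd R d d') d'' = eadd R d (eadd R d' d''))"
  and et1c2: "\<forall>C A A' a d. a \<in> hom R A A' \<longrightarrow> d \<in> ext R C A \<longrightarrow> push R a d \<in> ext R C A'"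
  and et1c3: "\<forall>C C' A c d. c \<in> hom R C' C \<longrightarrow> d \<in> ext R C A \<longrightarrow> pull R c d \<in> ext R C' A"
  and et1c4: "\<forall>C A d. C \<in> obj R \<longrightarrow> A \<in> obj R \<longrightarrow> d \<in> ext R C A \<longrightarrow>
        push R (idm R A) d = d \<and> pull R (idm R C) d = d"
  and et1c5: "\<forall>C A A' A'' a a' d. a \<in> hom R A A' \<longrightarrow> a' \<in> hom R A' A'' \<longrightarrow> d \<in> ext R C A \<longrightarrow>
        push R (cmp R a' a) d = push R a' (push R a d)"
  and et1c6: "\<forall>C C' C'' A c c' d. c \<in> hom R C' C \<longrightarrow> c' \<in> hom R C'' C' \<longrightarrow> d \<in> ext R C A \<longrightarrow>
        pull R (cmp R c c') d = pull R c' (pull R c d)"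
  and et1c7: "\<forall>C C' A A' a c d. a \<in> hom R A A' \<longrightarrow> c \<in> hom R C' C \<longrightarrow> d \<in> ext R C A \<longrightarrow>
        pull R c (push R a d) = push R a (pull R c d)"
  and et1c8: "\<forall>C A A' a a' d d'. a \<in> hom R A A' \<longrightarrow> a' \<in> hom R A A' \<longrightarrow> d \<in> ext R C A \<longrightarrow> d' \<in> ext R C A \<longrightarrow>
        push R a (eadd R d d') = eadd R (push R a d) (push R a d') \<and>
        push R (madd R a a') d = eadd R (push R a d) (push R a' d)"
  and et1c9: "\<forall>C C' A c c' d d'. c \<in> hom R C' C \<longrightarrow> c' \<in> hom R C' C \<longrightarrow> d \<in> ext R C A \<longrightarrow> d' \<in> ext R C A \<longrightarrow>
        pull R c (eadd R d d') = eadd R (pull R c d) (pull R c d') \<and>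
        pull R (madd R c c') d = eadd R (pull R c d) (pull R c' d)"
  apply (insert et1[unfolded ET1_def]) by (elim conjE, assumption)+

lemma ext_D: "d \<in> ext R C A \<Longrightarrow> d \<in> eel R \<and> edom R d = C \<and> ecod R d = A" unfolding ext_def by blast
lemma ezero_ext: "C \<in> obj R \<Longrightarrow> A \<in> obj R \<Longrightarrow> ezero R C A \<in> ext R C A" using et1c1 by blast
lemma push_ext: "a \<in> hom R A A' \<Longrightarrow> d \<in> ext R C A \<Longrightarrow> push R a d \<in> ext R C A'"
  using et1c2 by blast
lemma pull_ext: "c \<in> hom R C' C \<Longrightarrow> d \<in> ext R C A \<Longrightarrow> pull R c d \<in> ext R C' A"
  using et1c3 by blast
lemma push_id: "C \<in> obj R \<Longrightarrow> A \<in> obj R \<Longrightarrow> d \<in> ext R C A \<Longrightarrow> push R (idm R A) d = d"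
  using et1c4 by blast
lemma pull_id: "C \<in> obj R \<Longrightarrow> A \<in> obj R \<Longrightarrow> d \<in> ext R C A \<Longrightarrow> pull R (idm R C) d = d"
  using et1c4 by blast
lemma push_comp: "a \<in> hom R A A' \<Longrightarrow> a' \<in> hom R A' A'' \<Longrightarrow> d \<in> ext R C A \<Longrightarrow>
        push R (cmp R a' a) d = push R a' (push R a d)" using et1c5 by blast
lemma pull_comp: "c \<in> hom R C' C \<Longrightarrow> c' \<in> hom R C'' C' \<Longrightarrow> d \<in> ext R C A \<Longrightarrow>
        pull R (cmp R c c') d = pull R c' (pull R c d)" using et1c6 by blast
lemma pull_push: "a \<in> hom R A A' \<Longrightarrow> c \<in> hom R C' C \<Longrightarrow> d \<in> ext R C A \<Longrightarrow>
        pull R c (push R a d) = push R a (pull R c d)" using et1c7 by blast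

lemma idem_zero:
  assumes "C \<in> obj R" "A \<in> obj R" "u \<in> ext R C A" "eadd R u u = u"
  shows "u = ezero R C A"
proof -
  have g: "eneg R u \<in> ext R C A" "eadd R u (ezero R C A) = u" "eadd R u (eneg R u) = ezero R C A"
    "eadd R (eadd R u u) (eneg R u) = eadd R u (eadd R u (eneg R u))"
    using et1c1 assms by blast+
  have "u = eadd R u (ezero R C A)" using g by simp
  also have "\<dots> = eadd R u (eadd R u (eneg R u))" using g by simp
  also have "\<dots> = eadd R (eadd R u u) (eneg R u)" using g by simp
  also have "\<dots> = ezero R C A" using g assms by simp
  finally show ?thesis .
qed

lemma push_zero:
  assumes "a \<in> hom R A A'" "C \<in> obj R"
  shows "push R a (ezero R C A) = ezero R C A'"
proof -
  have o: "A \<in> obj R" "A' \<in> obj R" using hom_objs assms by blast+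
  have z: "ezero R C A \<in> ext R C A" using ezero_ext o assms by blast
  have zz: "eadd R (ezero R C A) (ezero R C A) = ezero R C A" using et1c1 z o assms by blast
  have "push R a (eadd R (ezero R C A) (ezero R C A)) = eadd R (push R a (ezero R C A)) (push R a (ezero R C A))"
    using et1c8 et1c9 assms z by blast
  then show ?thesis using idem_zero[OF assms(2) o(2) push_ext[OF assms(1) z]] zz by simp
qed

lemma pull_zero:
  assumes "c \<in> hom R C' C" "A \<in> obj R"
  shows "pull R c (ezero R C A) = ezero R C' A"
proof -
  have o: "C \<in> obj R" "C' \<in> obj R" using hom_objs assms by blast+
  have z: "ezero R C A \<in> ext R C A" using ezero_ext o assms by blast
  have zz: "eadd R (ezero R C A) (ezero R C A) = ezero R C A" using et1c1 z o assms by blast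
  have "pull R c (eadd R (ezero R C A) (ezero R C A)) = eadd R (pull R c (ezero R C A)) (pull R c (ezero R C A))"
    using et1c8 et1c9 assms z by blast
  then show ?thesis using idem_zero[OF o(2) assms(2) pull_ext[OF assms(1) z]] zz by simp
qed

lemma real_ex: "C \<in> obj R \<Longrightarrow> A \<in> obj R \<Longrightarrow> d \<in> ext R C A \<Longrightarrow>
   \<exists>B x y. x \<in> hom R A B \<and> y \<in> hom R B C \<and> realizes R d x y"
  using rl unfolding is_realization_def by blast

lemma real_mor: "d \<in> ext R C A \<Longrightarrow> d' \<in> ext R C' A' \<Longrightarrow> a \<in> hom R A A' \<Longrightarrow> c \<in> hom R C C' \<Longrightarrow>
        push R a d = pull R c d' \<Longrightarrow> realizes R d x y \<Longrightarrow> realizes R d' x' y' \<Longrightarrow>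
        (\<exists>b\<in>hom R (tgt R x) (tgt R x'). cmp R b x = cmp R x' a \<and> cmp R c y = cmp R y' b)"
  by (rule conjunct2[OF rl[unfolded is_realization_def], rule_format])

lemma et3_rule: "d \<in> ext R C A \<Longrightarrow> d' \<in> ext R C' A' \<Longrightarrow>
        x \<in> hom R A B \<Longrightarrow> y \<in> hom R B C \<Longrightarrow> x' \<in> hom R A' B' \<Longrightarrow> y' \<in> hom R B' C' \<Longrightarrow>
        realizes R d x y \<Longrightarrow> realizes R d' x' y' \<Longrightarrow>
        a \<in> hom R A A' \<Longrightarrow> b \<in> hom R B B' \<Longrightarrow> cmp R x' a = cmp R b x \<Longrightarrow>
        (\<exists>c\<in>hom R C C'. cmp R c y = cmp R y' b \<and> push R a d = pull R c d')"
  using et3 unfolding ET3_def by blast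

lemma et3op_rule: "d \<in> ext R C A \<Longrightarrow> d' \<in> ext R C' A' \<Longrightarrow>
        x \<in> hom R A B \<Longrightarrow> y \<in> hom R B C \<Longrightarrow> x' \<in> hom R A' B' \<Longrightarrow> y' \<in> hom R B' C' \<Longrightarrow>
        realizes R d x y \<Longrightarrow> realizes R d' x' y' \<Longrightarrow>
        b \<in> hom R B B' \<Longrightarrow> c \<in> hom R C C' \<Longrightarrow> cmp R c y = cmp R y' b \<Longrightarrow>
        (\<exists>a\<in>hom R A A'. cmp R x' a = cmp R b x \<and> push R a d = pull R c d')"
  using et3op unfolding ET3op_def by blast

end


context xtri begin

lemma bp_D: "is_biproduct R A B P i1 i2 p1 p2 \<Longrightarrow> i1 \<in> hom R A P \<and> i2 \<in> hom R B P \<and> p1 \<in> hom R P A \<and> p2 \<in> hom R P B \<and>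
     cmp R p1 i1 = idm R A \<and> cmp R p2 i2 = idm R B"
  unfolding is_biproduct_def by blast

lemma defl_zero:
  assumes "d \<in> ext R C A" "x \<in> hom R A B" "y \<in> hom R B C" "realizes R d x y"
  shows "pull R y d = ezero R B A"
proof -
  have o: "A \<in> obj R" "B \<in> obj R" "C \<in> obj R" using hom_objs assms by blast+
  obtain P i1 i2 p1 p2 where bp: "is_biproduct R A B P i1 i2 p1 p2" using biprod o by blast
  have h: "i1 \<in> hom R A P" "p2 \<in> hom R P B" using bp_D[OF bp] by blast+
  have r: "realizes R (ezero R B A) i1 p2" using zero_real bp o by blast
  obtain a where a: "a \<in> hom R A A" "push R a (ezero R B A) = pull R y d"
    using et3op_rule[OF ezero_ext[OF o(2) o(1)] assms(1) h(1) h(2) assms(2) assms(3) r assms(4) h(2) assms(3) refl]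
    by blast
  show ?thesis using a push_zero[OF a(1) o(2)] by simp
qed

lemma infl_zero:
  assumes "d \<in> ext R C A" "x \<in> hom R A B" "y \<in> hom R B C" "realizes R d x y"
  shows "push R x d = ezero R C B"
proof -
  have o: "A \<in> obj R" "B \<in> obj R" "C \<in> obj R" using hom_objs assms by blast+
  obtain P i1 i2 p1 p2 where bp: "is_biproduct R B C P i1 i2 p1 p2" using biprod o by blast
  have h: "i1 \<in> hom R B P" "p2 \<in> hom R P C" using bp_D[OF bp] by blast+
  have r: "realizes R (ezero R C B) i1 p2" using zero_real bp o by blast
  obtain c where c: "c \<in> hom R C C" "push R x d = pull R c (ezero R C B)"
    using et3_rule[OF assms(1) ezero_ext[OF o(3) o(2)] assms(2) assms(3) h(1) h(2) assms(4) r assms(2) h(1) refl]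
    by blast
  show ?thesis using c pull_zero[OF c(1) o(2)] by simp
qed

lemma L1:
  assumes "d \<in> ext R C A" "x \<in> hom R A B" "y \<in> hom R B C" "realizes R d x y"
    "\<eta> \<in> ext R X A" "X \<in> obj R" "push R x \<eta> = ezero R X B"
  shows "\<exists>c\<in>hom R X C. \<eta> = pull R c d"
proof -
  have o: "A \<in> obj R" "B \<in> obj R" "C \<in> obj R" using hom_objs assms by blast+
  obtain M m n where mn: "m \<in> hom R A M" "n \<in> hom R M X" "realizes R \<eta> m n"
    using real_ex[OF assms(6) o(1) assms(5)] by blast
  obtain P i1 i2 p1 p2 where bp: "is_biproduct R B X P i1 i2 p1 p2" using biprod o assms(6) by blast
  have h: "i1 \<in> hom R B P" "p1 \<in> hom R P B" "cmp R p1 i1 = idm R B" using bp_D[OF bp] by blast+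
  have r: "realizes R (ezero R X B) i1 p2" using zero_real bp o assms(6) by blast
  have eq: "push R x \<eta> = pull R (idm R X) (ezero R X B)"
    using assms(7) pull_id[OF assms(6) o(2) ezero_ext[OF assms(6) o(2)]] by simp
  obtain b where b: "b \<in> hom R (tgt R m) (tgt R i1)" "cmp R b m = cmp R i1 x"
    using real_mor[OF assms(5) ezero_ext[OF assms(6) o(2)] assms(2) id_hom[OF assms(6)] eq mn(3) r] by blast
  have bh: "b \<in> hom R M P" using b(1) hom_D mn(1) h(1) by metis
  have b'h: "cmp R p1 b \<in> hom R M B" using comp_hom bh h(2) by blast
  have "cmp R (cmp R p1 b) m = cmp R p1 (cmp R b m)" using assoc[OF mn(1) bh h(2)] by simp
  also have "\<dots> = cmp R (cmp R p1 i1) x" using b(2) assoc[OF assms(2) h(1) h(2)] by simp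
  also have "\<dots> = x" using h(3) id_l[OF assms(2)] by simp
  finally have eqq: "cmp R x (idm R A) = cmp R (cmp R p1 b) m" using id_r[OF assms(2)] by simp
  obtain c where c: "c \<in> hom R X C" "push R (idm R A) \<eta> = pull R c d"
    using et3_rule[OF assms(5) assms(1) mn(1) mn(2) assms(2) assms(3) mn(3) assms(4) id_hom[OF o(1)] b'h eqq]
    by blast
  show ?thesis using c push_id[OF assms(6) o(1) assms(5)] by auto
qed

lemma L2:
  assumes "g \<in> ext R C K" "k \<in> hom R K P" "p \<in> hom R P C" "realizes R g k p"
    "\<theta> \<in> ext R C Z" "Z \<in> obj R" "pull R p \<theta> = ezero R P Z"
  shows "\<exists>a\<in>hom R K Z. \<theta> = push R a g"
proof -
  have o: "K \<in> obj R" "P \<in> obj R" "C \<in> obj R" using hom_objs assms by blast+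
  obtain N m n where mn: "m \<in> hom R Z N" "n \<in> hom R N C" "realizes R \<theta> m n"
    using real_ex[OF o(3) assms(6) assms(5)] by blast
  obtain Q i1 i2 p1 p2 where bp: "is_biproduct R Z P Q i1 i2 p1 p2" using biprod o assms(6) by blast
  have h: "i1 \<in> hom R Z Q" "i2 \<in> hom R P Q" "p2 \<in> hom R Q P" "cmp R p2 i2 = idm R P" using bp_D[OF bp] by blast+
  have r: "realizes R (ezero R P Z) i1 p2" using zero_real bp o assms(6) by blast
  have eq: "push R (idm R Z) (ezero R P Z) = pull R p \<theta>"
    using assms(7) push_id[OF o(2) assms(6) ezero_ext[OF o(2) assms(6)]] by simp
  obtain b where b: "b \<in> hom R (tgt R i1) (tgt R m)" "cmp R p p2 = cmp R n b"
    using real_mor[OF ezero_ext[OF o(2) assms(6)] assms(5) id_hom[OF assms(6)] assms(3) eq r mn(3)] by blast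
  have bh: "b \<in> hom R Q N" using b(1) hom_D mn(1) h(1) by metis
  have b'h: "cmp R b i2 \<in> hom R P N" using comp_hom bh h(2) by blast
  have "cmp R n (cmp R b i2) = cmp R (cmp R n b) i2" using assoc[OF h(2) bh mn(2)] by simp
  also have "\<dots> = cmp R p (cmp R p2 i2)" using b(2) assoc[OF h(2) h(3) assms(3)] by simp
  also have "\<dots> = p" using h(4) id_r[OF assms(3)] by simp
  finally have eqq: "cmp R (idm R C) p = cmp R n (cmp R b i2)" using id_l[OF assms(3)] by simp
  obtain a where a: "a \<in> hom R K Z" "push R a g = pull R (idm R C) \<theta>"
    using et3op_rule[OF assms(1) assms(5) assms(2) assms(3) mn(1) mn(2) assms(4) mn(3) b'h id_hom[OF o(3)] eqq]
    by blast
  show ?thesis using a pull_id[OF o(3) assms(6) assms(5)] by auto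
qed

lemma L3:
  assumes "z \<in> ext R C A" "u \<in> hom R A M" "q \<in> hom R M C" "realizes R z u q"
    "f \<in> hom R X C" "pull R f z = ezero R X A"
  shows "\<exists>t\<in>hom R X M. cmp R q t = f"
proof -
  have o: "A \<in> obj R" "X \<in> obj R" "C \<in> obj R" using hom_objs assms by blast+
  obtain P i1 i2 p1 p2 where bp: "is_biproduct R A X P i1 i2 p1 p2" using biprod o by blast
  have h: "i1 \<in> hom R A P" "i2 \<in> hom R X P" "p2 \<in> hom R P X" "cmp R p2 i2 = idm R X" using bp_D[OF bp] by blast+
  have r: "realizes R (ezero R X A) i1 p2" using zero_real bp o by blast
  have eq: "push R (idm R A) (ezero R X A) = pull R f z"
    using assms(6) push_id[OF o(2) o(1) ezero_ext[OF o(2) o(1)]] by simp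
  obtain b where b: "b \<in> hom R (tgt R i1) (tgt R u)" "cmp R f p2 = cmp R q b"
    using real_mor[OF ezero_ext[OF o(2) o(1)] assms(1) id_hom[OF o(1)] assms(5) eq r assms(4)] by blast
  have bh: "b \<in> hom R P M" using b(1) hom_D assms(2) h(1) by metis
  have th: "cmp R b i2 \<in> hom R X M" using comp_hom bh h(2) by blast
  have "cmp R q (cmp R b i2) = cmp R (cmp R q b) i2" using assoc[OF h(2) bh assms(3)] by simp
  also have "\<dots> = cmp R f (cmp R p2 i2)" using b(2) assoc[OF h(2) h(3) assms(5)] by simp
  also have "\<dots> = f" using h(4) id_r[OF assms(5)] by simp
  finally show ?thesis using th by blast
qed

end



locale xtriF = xtri + fixes F assumes sub: "additive_subfunctor R F"
begin

lemma F_push: "a \<in> hom R A A' \<Longrightarrow> d \<in> ext R C A \<Longrightarrow> d \<in> F \<Longrightarrow> push R a d \<in> F"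
  using sub unfolding additive_subfunctor_def by blast
lemma F_pull: "c \<in> hom R C' C \<Longrightarrow> d \<in> ext R C A \<Longrightarrow> d \<in> F \<Longrightarrow> pull R c d \<in> F"
  using sub unfolding additive_subfunctor_def by blast
lemma Ph_pull: "f \<in> Ph R F \<Longrightarrow> f \<in> hom R X C \<Longrightarrow> A \<in> obj R \<Longrightarrow> d \<in> ext R C A \<Longrightarrow> pull R f d \<in> F"
  unfolding Ph_def hom_def by blast
lemma Ph_mor: "f \<in> Ph R F \<Longrightarrow> f \<in> hom R (src R f) (tgt R f)"
  unfolding Ph_def hom_def by blast
lemma Finj_D: "i \<in> F_inj R F \<Longrightarrow> i \<in> hom R A B \<Longrightarrow> C \<in> obj R \<Longrightarrow> d \<in> ext R C A \<Longrightarrow> d \<in> F \<Longrightarrow>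
   push R i d = ezero R C B"
  unfolding F_inj_def hom_def by blast

lemma Ph_left:
  assumes "m \<in> Ph R F" "m \<in> hom R X Y" "c \<in> hom R Y Z"
  shows "cmp R c m \<in> Ph R F"
proof -
  have ch: "cmp R c m \<in> hom R X Z" using comp_hom assms by blast
  { fix A d assume A: "A \<in> obj R" and d: "d \<in> ext R Z A"
    have "pull R (cmp R c m) d = pull R m (pull R c d)" using pull_comp[OF assms(3) assms(2) d] .
    moreover have "pull R m (pull R c d) \<in> F" using Ph_pull[OF assms(1) assms(2) A pull_ext[OF assms(3) d]] .
    ultimately have "pull R (cmp R c m) d \<in> F" by simp }
  then show ?thesis using ch unfolding Ph_def hom_def by blast
qed

lemma Ph_right:
  assumes "q \<in> Ph R F" "q \<in> hom R Y Z" "t \<in> hom R X Y"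
  shows "cmp R q t \<in> Ph R F"
proof -
  have ch: "cmp R q t \<in> hom R X Z" using comp_hom assms by blast
  { fix A d assume A: "A \<in> obj R" and d: "d \<in> ext R Z A"
    have "pull R (cmp R q t) d = pull R t (pull R q d)" using pull_comp[OF assms(2) assms(3) d] .
    moreover have "pull R t (pull R q d) \<in> F"
      using F_pull[OF assms(3) pull_ext[OF assms(2) d] Ph_pull[OF assms(1) assms(2) A d]] .
    ultimately have "pull R (cmp R q t) d \<in> F" by simp }
  then show ?thesis using ch unfolding Ph_def hom_def by blast
qed

lemma star_sub: "A \<in> obj R \<Longrightarrow> ideal_star R (Ph R F) X A \<subseteq> ext R X A \<inter> F"
  unfolding ideal_star_def using pull_ext Ph_pull by blast

lemma star_I: "C \<in> obj R \<Longrightarrow> i \<in> Ph R F \<Longrightarrow> i \<in> hom R X C \<Longrightarrow> d \<in> ext R C A \<Longrightarrow>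
  pull R i d \<in> ideal_star R (Ph R F) X A"
  unfolding ideal_star_def by blast

lemma p12:
  assumes "enough_special_injective_morphisms R F" "X \<in> obj R" "A \<in> obj R"
  shows "ext R X A \<inter> F = ideal_star R (Ph R F) X A"
proof
  show "ideal_star R (Ph R F) X A \<subseteq> ext R X A \<inter> F" using star_sub assms by blast
  show "ext R X A \<inter> F \<subseteq> ideal_star R (Ph R F) X A"
  proof
    fix \<eta> assume \<eta>: "\<eta> \<in> ext R X A \<inter> F"
    obtain B C e y d where
      t0: "E_triangle R A B C e y d" "d \<in> F" "e \<in> F_inj R F"
        "\<exists>B' C' x' y' d' b phi. E_triangle R A B' C' x' y' d' \<and>
           b \<in> hom R B B' \<and> phi \<in> hom R C C' \<and> phi \<in> Ph R F \<and>
           cmp R b e = cmp R x' (idm R A) \<and> cmp R phi y = cmp R y' b \<and>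
           push R (idm R A) d = pull R phi d'"
      using assms(1,3) unfolding enough_special_injective_morphisms_def by (elim ballE exE) blast+
    then obtain B' C' x' y' d' b \<phi> where t1': "E_triangle R A B' C' x' y' d'"
         "\<phi> \<in> hom R C C'" "\<phi> \<in> Ph R F" "push R (idm R A) d = pull R \<phi> d'" by blast
    note t = t0(1-3) t1'

    have t1: "d \<in> ext R C A" "e \<in> hom R A B" "y \<in> hom R B C" "realizes R d e y"
      and t2: "d' \<in> ext R C' A" using t unfolding E_triangle_def by blast+
    have o: "C \<in> obj R" "C' \<in> obj R" using hom_objs t(5) by blast+
    have "push R e \<eta> = ezero R X B" using Finj_D[OF t(3) t1(2) assms(2)] \<eta> by blast
    then obtain c where c: "c \<in> hom R X C" "\<eta> = pull R c d"
      using L1[OF t1 _ assms(2)] \<eta> by blast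
    have "d = pull R \<phi> d'" using t(7) push_id[OF o(1) assms(3) t1(1)] by simp
    then have "\<eta> = pull R (cmp R \<phi> c) d'" using c pull_comp[OF t(5) c(1) t2] by simp
    moreover have "cmp R \<phi> c \<in> Ph R F" using Ph_right[OF t(6) t(5) c(1)] .
    ultimately show "\<eta> \<in> ideal_star R (Ph R F) X A"
      using star_I[OF o(2) _ comp_hom[OF c(1) t(5)] t2] by simp
  qed
qed

lemma p21:
  assumes "\<forall>X\<in>obj R. \<forall>A\<in>obj R. ext R X A \<inter> F = ideal_star R (Ph R F) X A"
    "enough_injective_morphisms R F"
  shows "enough_special_injective_morphisms R F"
  unfolding enough_special_injective_morphisms_def
proof
  fix A assume A: "A \<in> obj R"
  obtain B C e y d where t: "E_triangle R A B C e y d" "d \<in> F" "e \<in> F_inj R F"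
    using assms(2) A unfolding enough_injective_morphisms_def by blast
  have t1: "d \<in> ext R C A" "e \<in> hom R A B" "y \<in> hom R B C" "realizes R d e y"
    using t unfolding E_triangle_def by blast+
  have oC: "C \<in> obj R" using hom_objs t1(3) by blast
  have "d \<in> ideal_star R (Ph R F) C A" using assms(1) oC A t1(1) t(2) by blast
  then obtain \<phi> \<theta> C' where p: "C' \<in> obj R" "\<phi> \<in> Ph R F" "\<phi> \<in> hom R C C'" "\<theta> \<in> ext R C' A"
     "d = pull R \<phi> \<theta>" unfolding ideal_star_def by blast
  obtain B' x' y' where r: "x' \<in> hom R A B'" "y' \<in> hom R B' C'" "realizes R \<theta> x' y'"
    using real_ex[OF p(1) A p(4)] by blast
  have eq: "push R (idm R A) d = pull R \<phi> \<theta>" using p(5) push_id[OF oC A t1(1)] by simp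
  obtain b where b: "b \<in> hom R (tgt R e) (tgt R x')" "cmp R b e = cmp R x' (idm R A)" "cmp R \<phi> y = cmp R y' b"
    using real_mor[OF t1(1) p(4) id_hom[OF A] p(3) eq t1(4) r(3)] by blast
  have bh: "b \<in> hom R B B'" using b(1) hom_D t1(2) r(1) by metis
  have "E_triangle R A B' C' x' y' \<theta>" unfolding E_triangle_def using p r by blast
  then show "\<exists>B C e y d. E_triangle R A B C e y d \<and> d \<in> F \<and> e \<in> F_inj R F \<and>
        (\<exists>B' C' x' y' d' b phi. E_triangle R A B' C' x' y' d' \<and>
           b \<in> hom R B B' \<and> phi \<in> hom R C C' \<and> phi \<in> Ph R F \<and>
           cmp R b e = cmp R x' (idm R A) \<and> cmp R phi y = cmp R y' b \<and>
           push R (idm R A) d = pull R phi d')"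
    using t bh b p eq by blast
qed

lemma Finj_perp: "F_inj R F \<subseteq> perpE R (Ph R F)"
proof
  fix g assume g: "g \<in> F_inj R F"
  have gm: "g \<in> mor R" using g unfolding F_inj_def by blast
  have gh: "g \<in> hom R (src R g) (tgt R g)" using hom_I gm .
  have oA: "src R g \<in> obj R" using hom_objs gh by blast
  { fix m d assume m: "m \<in> Ph R F" and d: "d \<in> ext R (tgt R m) (src R g)"
    have mh: "m \<in> hom R (src R m) (tgt R m)" using Ph_mor m .
    have oX: "src R m \<in> obj R" using hom_objs mh by blast
    have "pull R m (push R g d) = push R g (pull R m d)" using pull_push[OF gh mh d] .
    also have "\<dots> = ezero R (src R m) (tgt R g)"
      using Finj_D[OF g gh oX pull_ext[OF mh d] Ph_pull[OF m mh oA d]] .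
    finally have "pull R m (push R g d) = ezero R (src R m) (tgt R g)" . }
  then show "g \<in> perpE R (Ph R F)" unfolding perpE_def using gm by blast
qed

lemma p23:
  assumes "\<forall>X\<in>obj R. \<forall>A\<in>obj R. ext R X A \<inter> F = ideal_star R (Ph R F) X A"
  shows "perpE R (Ph R F) = F_inj R F"
proof
  show "F_inj R F \<subseteq> perpE R (Ph R F)" using Finj_perp .
  show "perpE R (Ph R F) \<subseteq> F_inj R F"
  proof
    fix g assume g: "g \<in> perpE R (Ph R F)"
    have gm: "g \<in> mor R" using g unfolding perpE_def by blast
    have gh: "g \<in> hom R (src R g) (tgt R g)" using hom_I gm .
    have oA: "src R g \<in> obj R" using hom_objs gh by blast
    { fix C \<eta> assume C: "C \<in> obj R" and \<eta>: "\<eta> \<in> ext R C (src R g) \<inter> F"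
      have "\<eta> \<in> ideal_star R (Ph R F) C (src R g)" using assms C oA \<eta> by blast
      then obtain m d C' where p: "C' \<in> obj R" "m \<in> Ph R F" "m \<in> hom R C C'" "d \<in> ext R C' (src R g)"
        "\<eta> = pull R m d" unfolding ideal_star_def by blast
      have st: "src R m = C" "tgt R m = C'" using hom_D p(3) by blast+
      have "push R g \<eta> = pull R m (push R g d)" using p(5) pull_push[OF gh p(3) p(4)] by simp
      also have "\<dots> = ezero R C (tgt R g)" using g p(2) p(4) st unfolding perpE_def by blast
      finally have "push R g \<eta> = ezero R C (tgt R g)" . }
    then show "g \<in> F_inj R F" unfolding F_inj_def using gm by blast
  qed
qed

end


context xtriF begin

lemma p32:
  assumes P3: "perpE R (Ph R F) = F_inj R F"
    and EIO: "enough_injective_objects R" and EPM: "enough_projective_morphisms R"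
    and EIM: "enough_injective_morphisms R F"
    and X: "X \<in> obj R" and A: "A \<in> obj R"
  shows "ext R X A \<inter> F = ideal_star R (Ph R F) X A"
proof
  show "ideal_star R (Ph R F) X A \<subseteq> ext R X A \<inter> F" using star_sub A by blast
  show "ext R X A \<inter> F \<subseteq> ideal_star R (Ph R F) X A"
  proof
    fix \<eta> assume \<eta>: "\<eta> \<in> ext R X A \<inter> F"
    obtain I C' x y \<delta> where ti: "E_triangle R A I C' x y \<delta>" "\<forall>Z\<in>obj R. ext R Z I = {ezero R Z I}"
      using EIO A unfolding enough_injective_objects_def by blast
    have ti1: "\<delta> \<in> ext R C' A" "x \<in> hom R A I" "y \<in> hom R I C'" "realizes R \<delta> x y"
      using ti(1) unfolding E_triangle_def by blast+
    have oC': "C' \<in> obj R" and oI: "I \<in> obj R" using hom_objs ti1 by blast+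
    obtain K P k p \<gamma> where tp: "E_triangle R K P C' k p \<gamma>"
        "\<forall>Z\<in>obj R. \<forall>d\<in>ext R C' Z. pull R p d = ezero R P Z"
      using EPM oC' unfolding enough_projective_morphisms_def by blast
    have tp1: "\<gamma> \<in> ext R C' K" "k \<in> hom R K P" "p \<in> hom R P C'" "realizes R \<gamma> k p"
      using tp(1) unfolding E_triangle_def by blast+
    have oK: "K \<in> obj R" using hom_objs tp1 by blast
    obtain BK D f s \<epsilon> where tf: "E_triangle R K BK D f s \<epsilon>" "\<epsilon> \<in> F" "f \<in> F_inj R F"
      using EIM oK unfolding enough_injective_morphisms_def by blast
    have tf1: "\<epsilon> \<in> ext R D K" "f \<in> hom R K BK" "s \<in> hom R BK D" "realizes R \<epsilon> f s"
      using tf(1) unfolding E_triangle_def by blast+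
    have oBK: "BK \<in> obj R" using hom_objs tf1 by blast
    define \<zeta> where "\<zeta> = push R f \<gamma>"
    have \<zeta>e: "\<zeta> \<in> ext R C' BK" unfolding \<zeta>_def using push_ext tf1(2) tp1(1) by blast
    obtain M u q where tq: "u \<in> hom R BK M" "q \<in> hom R M C'" "realizes R \<zeta> u q"
      using real_ex[OF oC' oBK \<zeta>e] by blast
    have oM: "M \<in> obj R" using hom_objs tq by blast
    have qPh: "q \<in> Ph R F"
    proof -
      { fix Z \<theta>' assume Z: "Z \<in> obj R" and \<theta>': "\<theta>' \<in> ext R C' Z"
        have "pull R p \<theta>' = ezero R P Z" using tp(2) Z \<theta>' by blast
        then obtain a where a: "a \<in> hom R K Z" "\<theta>' = push R a \<gamma>" using L2[OF tp1 \<theta>' Z] by blast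
        have qg: "pull R q \<gamma> \<in> ext R M K" using pull_ext tq(2) tp1(1) by blast
        have "push R f (pull R q \<gamma>) = pull R q \<zeta>" unfolding \<zeta>_def using pull_push[OF tf1(2) tq(2) tp1(1)] by simp
        also have "\<dots> = ezero R M BK" using defl_zero[OF \<zeta>e tq] .
        finally obtain c where c: "c \<in> hom R M D" "pull R q \<gamma> = pull R c \<epsilon>"
          using L1[OF tf1 qg oM] by blast
        have "pull R q \<gamma> \<in> F" using c F_pull[OF c(1) tf1(1) tf(2)] by simp
        then have "push R a (pull R q \<gamma>) \<in> F" using F_push[OF a(1) qg] by blast
        then have "pull R q \<theta>' \<in> F" using a(2) pull_push[OF a(1) tq(2) tp1(1)] by simp }
      then show ?thesis unfolding Ph_def using tq(2) hom_D by blast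
    qed
    have fact: "\<exists>t\<in>hom R X' M. cmp R q t = \<phi>" if \<phi>: "\<phi> \<in> hom R X' C'" "\<phi> \<in> Ph R F" for X' \<phi>
    proof -
      have oX': "X' \<in> obj R" using hom_objs \<phi>(1) by blast
      have pe: "pull R \<phi> \<gamma> \<in> ext R X' K" using pull_ext \<phi>(1) tp1(1) by blast
      have pF: "pull R \<phi> \<gamma> \<in> F" using Ph_pull[OF \<phi>(2) \<phi>(1) oK tp1(1)] .
      have "pull R \<phi> \<zeta> = push R f (pull R \<phi> \<gamma>)" unfolding \<zeta>_def using pull_push[OF tf1(2) \<phi>(1) tp1(1)] .
      also have "\<dots> = ezero R X' BK" using Finj_D[OF tf(3) tf1(2) oX' pe pF] .
      finally show ?thesis using L3[OF \<zeta>e tq \<phi>(1)] by blast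
    qed
    define \<theta> where "\<theta> = pull R q \<delta>"
    have \<theta>e: "\<theta> \<in> ext R M A" unfolding \<theta>_def using pull_ext tq(2) ti1(1) by blast
    obtain B g v where tg: "g \<in> hom R A B" "v \<in> hom R B M" "realizes R \<theta> g v"
      using real_ex[OF oM A \<theta>e] by blast
    have oB: "B \<in> obj R" using hom_objs tg by blast
    have gperp: "g \<in> perpE R (Ph R F)"
    proof -
      { fix m d assume m: "m \<in> Ph R F" and d: "d \<in> ext R (tgt R m) (src R g)"
        have mh: "m \<in> hom R (src R m) (tgt R m)" using Ph_mor m .
        have oD: "tgt R m \<in> obj R" and oX': "src R m \<in> obj R" using hom_objs mh by blast+
        have sg: "src R g = A" "tgt R g = B" using hom_D tg(1) by blast+
        have dA: "d \<in> ext R (tgt R m) A" using d sg by simp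
        have "push R x d \<in> ext R (tgt R m) I" using push_ext ti1(2) dA by blast
        then have "push R x d = ezero R (tgt R m) I" using ti(2) oD by blast
        then obtain c where c: "c \<in> hom R (tgt R m) C'" "d = pull R c \<delta>" using L1[OF ti1 dA oD] by blast
        have cm: "cmp R c m \<in> Ph R F" "cmp R c m \<in> hom R (src R m) C'"
          using Ph_left[OF m mh c(1)] comp_hom[OF mh c(1)] by blast+
        obtain t where t: "t \<in> hom R (src R m) M" "cmp R q t = cmp R c m" using fact[OF cm(2) cm(1)] by blast
        have "pull R m d = pull R (cmp R c m) \<delta>" using c(2) pull_comp[OF c(1) mh ti1(1)] by simp
        also have "\<dots> = pull R t \<theta>" unfolding \<theta>_def using t(2)[symmetric] pull_comp[OF tq(2) t(1) ti1(1)] by simp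
        finally have pmd: "pull R m d = pull R t \<theta>" .
        have "pull R m (push R g d) = push R g (pull R m d)" using pull_push[OF tg(1) mh dA] .
        also have "\<dots> = pull R t (push R g \<theta>)" using pmd pull_push[OF tg(1) t(1) \<theta>e] by simp
        also have "\<dots> = pull R t (ezero R M B)" using infl_zero[OF \<theta>e tg] by simp
        also have "\<dots> = ezero R (src R m) (tgt R g)" using pull_zero[OF t(1) oB] sg by simp
        finally have "pull R m (push R g d) = ezero R (src R m) (tgt R g)" . }
      then show ?thesis unfolding perpE_def using tg(1) hom_D by blast
    qed
    have gF: "g \<in> F_inj R F" using gperp P3 by simp
    have "push R g \<eta> = ezero R X B" using Finj_D[OF gF tg(1) X] \<eta> by blast
    then obtain c where c: "c \<in> hom R X M" "\<eta> = pull R c \<theta>" using L1[OF \<theta>e tg _ X] \<eta> by blast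
    have "\<eta> = pull R (cmp R q c) \<delta>" using c(2) unfolding \<theta>_def using c pull_comp[OF tq(2) c(1) ti1(1)] by simp
    then show "\<eta> \<in> ideal_star R (Ph R F) X A"
      using star_I[OF oC' Ph_right[OF qPh tq(2) c(1)] comp_hom[OF c(1) tq(2)] ti1(1)] by simp
  qed
qed

end

theorem corollary4p7:
  fixes R :: "('o,'m,'e) ext_cat_data" and F :: "'e set"
  assumes "extriangulated R"
    and "enough_injective_objects R"
    and "enough_projective_morphisms R"
    and "additive_subfunctor R F"
    and "enough_injective_morphisms R F"
  shows "(enough_special_injective_morphisms R F \<longleftrightarrow>
            (\<forall>X\<in>obj R. \<forall>A\<in>obj R. ext R X A \<inter> F = ideal_star R (Ph R F) X A))
       \<and> ((\<forall>X\<in>obj R. \<forall>A\<in>obj R. ext R X A \<inter> F = ideal_star R (Ph R F) X A) \<longleftrightarrow>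
            perpE R (Ph R F) = F_inj R F)"
proof -
  interpret xtriF R F using assms(1,4) by (unfold_locales)
  show ?thesis using p12 p21 p23 p32 assms by blast
qed



end
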